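(* Let $d$ be a homogeneous distance on $\mathbb H$ with closed unit ball $B$ centered at $0$. Assume there exist $\vec v\in\{(v_1,v_2,0)\}\subset\mathbb R^3$, $\vec v\neq0$, and $\bar\epsilon>0$ such that $\Omega_\epsilon(\vec v)\neq\emptyset$ for all $0<\epsilon\leq\bar\epsilon$. Then BCP does not hold in $(\mathbb H,d)$.
   Context: $\mathbb H=\mathbb R^3$ with group law $(x,y,z)\cdot(x',y',z')=(x+x',y+y',z+z'+\tfrac12(xy'-yx'))$, dilations $\delta_\lambda(x,y,z)=(\lambda x,\lambda y,\lambda^2z)$. A distance $d$ is homogeneous if it induces the Euclidean topology, is left invariant and satisfies $d(\delta_\lambda p,\delta_\lambda q)=\lambda d(p,q)$. For $p\in\mathbb H$, $\vec v\neq 0$ and $\beta\in(0,\pi/2)$, $\mathrm{cone}(p,\vec v,\beta)$ is the Euclidean half-cone in $\mathbb R^3$ with vertex $p$, axis $p+\mathbb R^+\vec v$ and opening $2\beta$. A vector $\vec v\neq0$ points out of $B$ at $p\in\partial B$ if there are an open neighbourhood $U$ of $p$ and $\beta\in(0,\pi/2)$ with $B\cap\mathrm{cone}(p,\vec v,\beta)\cap U=\{p\}$. For $p=(x_p,y_p,z_p)$, $\tau_p(q)=p\cdot q$ is affine and $(\tau_p)_*$ denotes its linear part: $(\tau_p)_*(v_1,v_2,v_3)=(v_1,v_2,v_3+\tfrac12(x_pv_2-y_pv_1))$. Let $\hat\pi(x,y,z)=(x,y,0)$. $\Omega(\vec v)$ is the set of $q\in\partial B$ such that $(\tau_{q^{-1}})_*(\vec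 v)$ points out of $B$ at $q^{-1}$; $\Omega_\epsilon(\vec v)$ is the set of $q\in\Omega(\vec v)$ such that $\hat\pi(q)=\lambda\vec w$ for some $\lambda>0$ and some $\vec w\in\operatorname{Im}\hat\pi$ with $\|\vec w-\vec v\|\leq\epsilon$ (Euclidean norm). BCP: there is $N\geq1$ such that for every bounded $A$ and every family $\mathcal B$ of closed balls with each point of $A$ the center of some ball of $\mathcal B$, some subfamily $\mathcal F$ satisfies $\chi_A\le\sum_{B\in\mathcal F}\chi_B\le N$. *)

theory Defs
  imports "HOL-Analysis.Analysis"
begin

type_synonym hpoint = "real \<times> real \<times> real"

definition hmult :: "hpoint \<Rightarrow> hpoint \<Rightarrow> hpoint" where
  "hmult p q = (case p of (x, y, z) \<Rightarrow> case q of (x', y', z') \<Rightarrow>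
      (x + x', y + y', z + z' + (1/2) * (x * y' - y * x')))"

definition hinv :: "hpoint \<Rightarrow> hpoint" where
  "hinv p = (case p of (x, y, z) \<Rightarrow> (-x, -y, -z))"

definition hdil :: "real \<Rightarrow> hpoint \<Rightarrow> hpoint" where
  "hdil l p = (case p of (x, y, z) \<Rightarrow> (l * x, l * y, l^2 * z))"

definition is_distance :: "(hpoint \<Rightarrow> hpoint \<Rightarrow> real) \<Rightarrow> bool" where
  "is_distance d \<longleftrightarrow>
     (\<forall>p q. 0 \<le> d p q) \<and> (\<forall>p q. d p q = 0 \<longleftrightarrow> p = q) \<and>
     (\<forall>p q. d p q = d q p) \<and> (\<forall>p q r. d p r \<le> d p q + d q r)"

definition induces_euclidean_topology :: "(hpoint \<Rightarrow> hpoint \<Rightarrow> real) \<Rightarrow> bool" where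
  "induces_euclidean_topology d \<longleftrightarrow>
     (\<forall>U :: hpoint set. open U \<longleftrightarrow> (\<forall>p\<in>U. \<exists>r>0. \<forall>q. d p q < r \<longrightarrow> q \<in> U))"

definition homogeneous_distance :: "(hpoint \<Rightarrow> hpoint \<Rightarrow> real) \<Rightarrow> bool" where
  "homogeneous_distance d \<longleftrightarrow>
     is_distance d \<and> induces_euclidean_topology d \<and>
     (\<forall>p q q'. d (hmult p q) (hmult p q') = d q q') \<and>
     (\<forall>l>0. \<forall>p q. d (hdil l p) (hdil l q) = l * d p q)"

definition dcball :: "(hpoint \<Rightarrow> hpoint \<Rightarrow> real) \<Rightarrow> hpoint \<Rightarrow> real \<Rightarrow> hpoint set" where
  "dcball d c r = {q. d c q \<le> r}"

text \<open>Euclidean closed half-cone with vertex p, axis p + R^+ v, opening 2 beta.\<close>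
definition cone :: "hpoint \<Rightarrow> hpoint \<Rightarrow> real \<Rightarrow> hpoint set" where
  "cone p v \<beta> = {q. (q - p) \<bullet> v \<ge> norm (q - p) * norm v * cos \<beta>}"

definition points_out :: "hpoint set \<Rightarrow> hpoint \<Rightarrow> hpoint \<Rightarrow> bool" where
  "points_out B v p \<longleftrightarrow> v \<noteq> 0 \<and>
     (\<exists>U \<beta>. open U \<and> p \<in> U \<and> 0 < \<beta> \<and> \<beta> < pi/2 \<and> B \<inter> cone p v \<beta> \<inter> U = {p})"

text \<open>Linear part of the left translation by p.\<close>
definition tau_star :: "hpoint \<Rightarrow> hpoint \<Rightarrow> hpoint" where
  "tau_star p v = (case p of (xp, yp, zp) \<Rightarrow> case v of (v1, v2, v3) \<Rightarrow>
      (v1, v2, v3 + (1/2) * (xp * v2 - yp * v1)))"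

definition hpi :: "hpoint \<Rightarrow> hpoint" where
  "hpi p = (case p of (x, y, z) \<Rightarrow> (x, y, 0))"

definition Omega :: "hpoint set \<Rightarrow> hpoint \<Rightarrow> hpoint set" where
  "Omega B v = {q \<in> frontier B. points_out B (tau_star (hinv q) v) (hinv q)}"

definition Omega_eps :: "hpoint set \<Rightarrow> real \<Rightarrow> hpoint \<Rightarrow> hpoint set" where
  "Omega_eps B \<epsilon> v = {q \<in> Omega B v. \<exists>l>0. \<exists>w \<in> range hpi.
       norm (w - v) \<le> \<epsilon> \<and> hpi q = l *\<^sub>R w}"

text \<open>A family of closed balls is a set of
  (center, radius) pairs with positive radius; the bound on the sum of
  characteristic functions says every point lies in at most N balls of F.\<close>
definition BCP :: "(hpoint \<Rightarrow> hpoint \<Rightarrow> real) \<Rightarrow> bool" where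
  "BCP d \<longleftrightarrow> (\<exists>N::nat. N \<ge> 1 \<and>
     (\<forall>(A :: hpoint set) (\<B> :: (hpoint \<times> real) set).
        (\<exists>c R. \<forall>a\<in>A. d c a \<le> R) \<longrightarrow>
        (\<forall>(c, r)\<in>\<B>. r > 0) \<longrightarrow>
        (\<forall>a\<in>A. \<exists>r. (a, r) \<in> \<B>) \<longrightarrow>
        (\<exists>\<F> \<subseteq> \<B>. (\<forall>a\<in>A. \<exists>(c, r)\<in>\<F>. a \<in> dcball d c r) \<and>
           (\<forall>x. finite {(c, r)\<in>\<F>. x \<in> dcball d c r} \<and>
                 card {(c, r)\<in>\<F>. x \<in> dcball d c r} \<le> N))))"

end

theory Submission
  imports Defs
begin

lemma cont_pos:
  fixes f :: "'a::metric_space \<Rightarrow> real"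
  assumes "isCont f x" "f x > 0" shows "\<exists>\<delta>>0. \<forall>y. dist y x < \<delta> \<longrightarrow> f y > 0"
proof -
  have "(f \<longlongrightarrow> f x) (at x)" using assms(1) by (simp add: isCont_def)
  then have "eventually (\<lambda>y. f y > 0) (at x)" using assms(2) by (rule order_tendstoD(1))
  then obtain \<delta> where "\<delta>>0" "\<forall>y. y \<noteq> x \<and> dist y x < \<delta> \<longrightarrow> f y > 0"
    by (auto simp: eventually_at)
  then show ?thesis using assms(2) by metis
qed

lemma cont_open:
  fixes f :: "'a::metric_space \<Rightarrow> 'b::topological_space"
  assumes "isCont f x" "open U" "f x \<in> U" shows "\<exists>\<delta>>0. \<forall>y. dist y x < \<delta> \<longrightarrow> f y \<in> U"
proof -
  have "(f \<longlongrightarrow> f x) (at x)" using assms(1) by (simp add: isCont_def)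
  then have "eventually (\<lambda>y. f y \<in> U) (at x)" using assms(2,3) by (rule topological_tendstoD)
  then obtain \<delta> where "\<delta>>0" "\<forall>y. y \<noteq> x \<and> dist y x < \<delta> \<longrightarrow> f y \<in> U"
    by (auto simp: eventually_at)
  then show ?thesis using assms(3) by metis
qed

lemma tau_star_alt: "tau_star p y = (fst y, fst (snd y), snd (snd y) + 1/2 * (fst p * fst (snd y) - fst (snd p) * fst y))"
  by (cases p; cases y) (simp add: tau_star_def)

lemma tau_star_scale: "tau_star p (t *\<^sub>R y) = t *\<^sub>R tau_star p y"
  by (simp add: tau_star_alt algebra_simps)

lemma tau_star_zero_iff: "tau_star p y = 0 \<longleftrightarrow> y = 0"
  by (cases y) (auto simp: tau_star_alt zero_prod_def)

lemma hmult_hinv_minus: "hmult (hinv q) x - hinv q = tau_star (hinv q) x"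
  by (cases q; cases x) (simp add: hmult_def hinv_def tau_star_def algebra_simps)

lemma hmult_zero: "hmult q 0 = q"
  by (cases q) (simp add: hmult_def zero_prod_def)

lemma hmult_cancel: "hmult q (hmult (hinv q) x) = x"
  by (cases q; cases x) (simp add: hmult_def hinv_def field_simps)

lemma hdil_zero: "hdil r 0 = 0"
  by (simp add: hdil_def zero_prod_def)

lemma hdil_zero_scale: "hdil 0 x = 0"
  by (cases x) (simp add: hdil_def zero_prod_def)

lemma hdil_comp: "hdil r (hdil s x) = hdil (r * s) x"
  by (cases x) (simp add: hdil_def power_mult_distrib)

lemma hdil_alt: "hdil s x = (s * fst x, s * fst (snd x), s^2 * snd (snd x))"
  by (cases x) (simp add: hdil_def)

lemma hmult_alt: "hmult p q = (fst p + fst q, fst (snd p) + fst (snd q),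
   snd (snd p) + snd (snd q) + 1/2 * (fst p * fst (snd q) - fst (snd p) * fst q))"
  by (cases p; cases q) (simp add: hmult_def)

lemma hpi_alt: "hpi q = (fst q, fst (snd q), 0)"
  by (cases q) (simp add: hpi_def)


lemma frontier_ball:
  assumes hom: "homogeneous_distance d" and q: "q \<in> frontier (dcball d 0 1)"
  shows "d 0 q = 1"
proof -
  have dist: "is_distance d" and top: "induces_euclidean_topology d"
    using hom by (auto simp: homogeneous_distance_def)
  have sym: "\<And>p q. d p q = d q p" and tri: "\<And>p q r. d p r \<le> d p q + d q r"
    using dist by (auto simp: is_distance_def)
  have op: "open U \<longleftrightarrow> (\<forall>p\<in>U. \<exists>r>0. \<forall>q. d p q < r \<longrightarrow> q \<in> U)" for U
    using top by (simp add: induces_euclidean_topology_def)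
  have o1: "open {q. d 0 q > 1}"
    unfolding op
  proof (intro ballI)
    fix p assume "p \<in> {q. d 0 q > 1}"
    then have "d 0 p > 1" by simp
    show "\<exists>r>0. \<forall>q. d p q < r \<longrightarrow> q \<in> {q. d 0 q > 1}"
    proof (intro exI[of _ "d 0 p - 1"] conjI allI impI)
      show "d 0 p - 1 > 0" using \<open>d 0 p > 1\<close> by simp
      fix q assume "d p q < d 0 p - 1"
      moreover have "d 0 p \<le> d 0 q + d q p" by (rule tri)
      ultimately show "q \<in> {q. d 0 q > 1}" using sym[of p q] by simp
    qed
  qed
  have "closed (dcball d 0 1)"
  proof -
    have "dcball d 0 1 = - {q. d 0 q > 1}" by (auto simp: dcball_def)
    then show ?thesis using o1 by (simp add: closed_def)
  qed
  have o2: "open {q. d 0 q < 1}"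
    unfolding op
  proof (intro ballI)
    fix p assume "p \<in> {q. d 0 q < 1}"
    then have "d 0 p < 1" by simp
    show "\<exists>r>0. \<forall>q. d p q < r \<longrightarrow> q \<in> {q. d 0 q < 1}"
    proof (intro exI[of _ "1 - d 0 p"] conjI allI impI)
      show "1 - d 0 p > 0" using \<open>d 0 p < 1\<close> by simp
      fix q assume "d p q < 1 - d 0 p"
      moreover have "d 0 q \<le> d 0 p + d p q" by (rule tri)
      ultimately show "q \<in> {q. d 0 q < 1}" by simp
    qed
  qed
  have "q \<in> closure (dcball d 0 1)" "q \<notin> interior (dcball d 0 1)"
    using q by (auto simp: frontier_def)
  then have "q \<in> dcball d 0 1" using \<open>closed (dcball d 0 1)\<close> by (simp add: closure_closed)
  moreover have "\<not> d 0 q < 1"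
  proof
    assume "d 0 q < 1"
    then have "q \<in> interior (dcball d 0 1)"
      using o2 by (intro interiorI[of "{q. d 0 q < 1}"]) (auto simp: dcball_def)
    then show False using \<open>q \<notin> interior _\<close> by simp
  qed
  ultimately show ?thesis by (simp add: dcball_def)
qed


lemma key:
  assumes hom: "homogeneous_distance d" and q: "q \<in> Omega (dcball d 0 1) v"
  shows "\<exists>\<epsilon>>0. \<forall>q'\<in>Omega_eps (dcball d 0 1) \<epsilon> v. \<exists>\<sigma>>0. \<forall>s. 0 < s \<and> s < \<sigma> \<longrightarrow> d q (hdil s q') > 1"
proof -
  define B where "B = dcball d 0 1"
  define h where "h = hinv q"
  define L where "L = tau_star h"
  define w0 where "w0 = L v"
  from q obtain U \<beta> where w0: "w0 \<noteq> 0" and U: "open U" "h \<in> U" and b: "0 < \<beta>" "\<beta> < pi/2"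
    and cone: "B \<inter> cone h w0 \<beta> \<inter> U = {h}"
    by (auto simp: Omega_def points_out_def B_def h_def L_def w0_def)
  have linv: "\<And>p q q'. d (hmult p q) (hmult p q') = d q q'" and
    dil: "\<And>l p q. l > 0 \<Longrightarrow> d (hdil l p) (hdil l q) = l * d p q"
    using hom by (auto simp: homogeneous_distance_def)
  define g where "g y = L y \<bullet> w0 - norm (L y) * norm w0 * cos \<beta>" for y
  have contL: "isCont L y" for y
    unfolding L_def tau_star_alt[abs_def] by (intro continuous_intros)
  have contg: "isCont g y" for y
    unfolding g_def by (intro continuous_intros contL)
  have cb: "cos \<beta> < 1" using cos_monotone_0_pi[of 0 \<beta>] b by simp
  have "g v = norm w0 ^ 2 * (1 - cos \<beta>)"
    by (simp add: g_def w0_def[symmetric] dot_square_norm algebra_simps power2_eq_square)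
  moreover have "norm w0 ^ 2 > 0" using w0 by simp
  ultimately have gv: "g v > 0" using cb by simp
  obtain \<delta> where \<delta>: "\<delta> > 0" "\<And>y. dist y v < \<delta> \<Longrightarrow> g y > 0"
    using cont_pos[OF contg gv] by blast
  have ghom: "g (t *\<^sub>R y) = t * g y" if "t > 0" for t y
    using that by (simp add: g_def L_def tau_star_scale algebra_simps)
  show ?thesis
  proof (rule exI[of _ "\<delta>/2"], intro conjI ballI)
    show "\<delta>/2 > 0" using \<delta> by simp
    fix q' assume "q' \<in> Omega_eps (dcball d 0 1) (\<delta>/2) v"
    then obtain l w where l: "l > 0" "norm (w - v) \<le> \<delta>/2" "hpi q' = l *\<^sub>R w"
      unfolding Omega_eps_def by blast
    obtain a b c where q'abc: "q' = (a,b,c)" by (cases q') auto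
    have "g w > 0" using \<delta> l by (simp add: dist_norm)
    moreover have "(a, b, 0) = l *\<^sub>R w" using l(3) by (simp add: hpi_def q'abc)
    ultimately have g0: "g (a, b, 0) > 0" using ghom[OF l(1)] l(1) by simp
    define k where "k s = g (a, b, s * c)" for s :: real
    have "isCont k 0" unfolding k_def
      by (intro continuous_at_compose[of 0 "\<lambda>s. (a, b, s * c)" g, unfolded o_def] continuous_intros contg)
    moreover have "k 0 > 0" using g0 by (simp add: k_def)
    ultimately obtain \<sigma>1 where \<sigma>1: "\<sigma>1 > 0" "\<And>s. dist s 0 < \<sigma>1 \<Longrightarrow> k s > 0"
      using cont_pos by blast
    define P where "P s = hmult h (hdil s q')" for s :: real
    have cP: "isCont P 0" unfolding P_def hmult_alt[abs_def] hdil_alt[abs_def]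
      by (intro continuous_intros)
    have "P 0 = h" by (simp add: P_def hdil_zero_scale hmult_zero)
    then obtain \<sigma>2 where \<sigma>2: "\<sigma>2 > 0" "\<And>s. dist s 0 < \<sigma>2 \<Longrightarrow> P s \<in> U"
      using cont_open[OF cP U(1)] U(2) by auto
    show "\<exists>\<sigma>>0. \<forall>s. 0 < s \<and> s < \<sigma> \<longrightarrow> d q (hdil s q') > 1"
    proof -
    have "min \<sigma>1 \<sigma>2 > 0" using \<sigma>1 \<sigma>2 by simp
    moreover have "d q (hdil s q') > 1" if s: "0 < s \<and> s < min \<sigma>1 \<sigma>2" for s
    proof -
      define x where "x = hdil s q'"
      have "x = s *\<^sub>R (a, b, s * c)" by (simp add: x_def q'abc hdil_def power2_eq_square)
      then have gx: "g x = s * k s" using ghom[of s "(a, b, s * c)"] s by (simp only: k_def)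
      have "k s > 0" using \<sigma>1 s by simp
      then have gx0: "g x > 0" using gx s by simp
      have Pdiff: "P s - h = L x" by (simp add: P_def L_def x_def h_def hmult_hinv_minus)
      have "P s \<in> cone h w0 \<beta>" using gx0 Pdiff by (simp add: cone_def g_def)
      moreover have "P s \<in> U" using \<sigma>2 s by simp
      moreover have "P s \<noteq> h"
      proof
        assume "P s = h"
        then have "L x = 0" using Pdiff by simp
        then have "g x = 0" by (simp add: g_def)
        then show False using gx0 by simp
      qed
      ultimately have "P s \<notin> B" using cone by blast
      then have "d 0 (P s) > 1" by (simp add: B_def dcball_def)
      moreover have "d 0 (P s) = d q x"
        using linv[of q 0 "P s"] by (simp add: hmult_zero P_def h_def x_def hmult_cancel)
      ultimately show "d q (hdil s q') > 1" by (simp add: x_def)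
    qed
    ultimately show ?thesis by blast
    qed
  qed
qed


definition goodset :: "(hpoint \<Rightarrow> hpoint \<Rightarrow> real) \<Rightarrow> hpoint \<Rightarrow> (hpoint \<times> real) set \<Rightarrow> bool" where
  "goodset d v P \<longleftrightarrow> finite P \<and>
     (\<forall>e\<in>P. 0 < snd e \<and> snd e \<le> 1 \<and> d 0 (fst e) = snd e \<and>
        (\<exists>q\<in>Omega (dcball d 0 1) v. fst e = hdil (snd e) q)) \<and>
     (\<forall>x\<in>P. \<forall>y\<in>P. x \<noteq> y \<longrightarrow> d (fst x) (fst y) > snd x)"

lemma ball_key:
  assumes hom: "homogeneous_distance d" and q: "q \<in> Omega (dcball d 0 1) v" and r: "r > 0"
  shows "\<exists>\<epsilon>>0. \<forall>q'\<in>Omega_eps (dcball d 0 1) \<epsilon> v. \<exists>\<sigma>>0. \<forall>s. 0 < s \<and> s < \<sigma> \<longrightarrow>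
     d (hdil r q) (hdil (r * s) q') > r"
proof -
  have dil: "\<And>l p q. l > 0 \<Longrightarrow> d (hdil l p) (hdil l q) = l * d p q"
    using hom by (auto simp: homogeneous_distance_def)
  obtain \<epsilon> where "\<epsilon> > 0" and H: "\<forall>q'\<in>Omega_eps (dcball d 0 1) \<epsilon> v. \<exists>\<sigma>>0. \<forall>s. 0 < s \<and> s < \<sigma> \<longrightarrow> d q (hdil s q') > 1"
    using key[OF hom q] by blast
  show ?thesis
  proof (rule exI[of _ \<epsilon>], intro conjI ballI)
    show "\<epsilon> > 0" by fact
    fix q' assume "q' \<in> Omega_eps (dcball d 0 1) \<epsilon> v"
    then obtain \<sigma> where "\<sigma> > 0" and S: "\<forall>s. 0 < s \<and> s < \<sigma> \<longrightarrow> d q (hdil s q') > 1"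
      using H by blast
    have "d (hdil r q) (hdil (r * s) q') > r" if "0 < s \<and> s < \<sigma>" for s
    proof -
      have "d (hdil r q) (hdil (r * s) q') = r * d q (hdil s q')"
        using dil[OF r, of q "hdil s q'"] by (simp add: hdil_comp)
      moreover have "d q (hdil s q') > 1" using S that by blast
      ultimately show ?thesis using r by simp
    qed
    then show "\<exists>\<sigma>>0. \<forall>s. 0 < s \<and> s < \<sigma> \<longrightarrow> d (hdil r q) (hdil (r * s) q') > r"
      using \<open>\<sigma> > 0\<close> by blast
  qed
qed

lemma build:
  fixes d :: "hpoint \<Rightarrow> hpoint \<Rightarrow> real" and v :: hpoint and \<epsilon>0 :: real
  assumes hom: "homogeneous_distance d"
    and e0: "\<epsilon>0 > 0"
    and hyp: "\<forall>\<epsilon>. 0 < \<epsilon> \<and> \<epsilon> \<le> \<epsilon>0 \<longrightarrow> Omega_eps (dcball d 0 1) \<epsilon> v \<noteq> {}"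
  shows "\<exists>P. goodset d v P \<and> card P = n"
proof (induction n)
  case 0
  show ?case by (intro exI[of _ "{}"]) (simp add: goodset_def)
next
  case (Suc n)
  then obtain P where gP: "goodset d v P" and cP: "card P = n" by blast
  have fin: "finite P" using gP by (simp add: goodset_def)
  have Pe: "\<And>e. e \<in> P \<Longrightarrow> 0 < snd e \<and> snd e \<le> 1 \<and> d 0 (fst e) = snd e \<and>
        (\<exists>q\<in>Omega (dcball d 0 1) v. fst e = hdil (snd e) q)"
    using gP by (simp add: goodset_def)
  have Pxy: "\<And>x y. x \<in> P \<Longrightarrow> y \<in> P \<Longrightarrow> x \<noteq> y \<Longrightarrow> d (fst x) (fst y) > snd x"
    using gP by (simp add: goodset_def)
  have dist: "is_distance d" using hom by (simp add: homogeneous_distance_def)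
  have sym: "\<And>p q. d p q = d q p" and tri: "\<And>p q r. d p r \<le> d p q + d q r"
    using dist by (auto simp: is_distance_def)
  have dil: "\<And>l p q. l > 0 \<Longrightarrow> d (hdil l p) (hdil l q) = l * d p q"
    using hom by (auto simp: homogeneous_distance_def)
  have "\<forall>e\<in>P. \<exists>\<epsilon>>0. \<forall>q'\<in>Omega_eps (dcball d 0 1) \<epsilon> v. \<exists>\<sigma>>0. \<forall>s. 0 < s \<and> s < \<sigma> \<longrightarrow>
     d (fst e) (hdil (snd e * s) q') > snd e"
  proof
    fix e assume "e \<in> P"
    then obtain q where "q \<in> Omega (dcball d 0 1) v" "fst e = hdil (snd e) q" "snd e > 0"
      using Pe by blast
    then show "\<exists>\<epsilon>>0. \<forall>q'\<in>Omega_eps (dcball d 0 1) \<epsilon> v. \<exists>\<sigma>>0. \<forall>s. 0 < s \<and> s < \<sigma> \<longrightarrow>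
     d (fst e) (hdil (snd e * s) q') > snd e"
      using ball_key[OF hom, of q v "snd e"] by simp
  qed
  from bchoice[OF this] obtain f where F: "\<forall>e\<in>P. f e > 0 \<and> (\<forall>q'\<in>Omega_eps (dcball d 0 1) (f e) v. \<exists>\<sigma>>0. \<forall>s. 0 < s \<and> s < \<sigma> \<longrightarrow>
     d (fst e) (hdil (snd e * s) q') > snd e)"
    by blast
  have f: "\<And>e. e \<in> P \<Longrightarrow> f e > 0" using F by blast
  have fH: "\<And>e. e \<in> P \<Longrightarrow> \<forall>q'\<in>Omega_eps (dcball d 0 1) (f e) v. \<exists>\<sigma>>0. \<forall>s. 0 < s \<and> s < \<sigma> \<longrightarrow>
     d (fst e) (hdil (snd e * s) q') > snd e" using F by blast
  define \<epsilon> where "\<epsilon> = Min (insert \<epsilon>0 (f ` P))"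
  have \<epsilon>pos: "\<epsilon> > 0" using fin f e0 by (simp add: \<epsilon>_def)
  have \<epsilon>le0: "\<epsilon> \<le> \<epsilon>0" using fin by (simp add: \<epsilon>_def)
  have \<epsilon>le: "\<And>e. e \<in> P \<Longrightarrow> \<epsilon> \<le> f e" using fin by (simp add: \<epsilon>_def)
  obtain q' where q': "q' \<in> Omega_eps (dcball d 0 1) \<epsilon> v"
    using hyp \<epsilon>pos \<epsilon>le0 by blast
  have q'O: "q' \<in> Omega (dcball d 0 1) v" using q' by (simp add: Omega_eps_def)
  have q'1: "d 0 q' = 1"
    using q'O frontier_ball[OF hom] by (simp add: Omega_def)
  have "\<forall>e\<in>P. \<exists>\<sigma>>0. \<forall>s. 0 < s \<and> s < \<sigma> \<longrightarrow> d (fst e) (hdil (snd e * s) q') > snd e"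
  proof
    fix e assume e: "e \<in> P"
    have "q' \<in> Omega_eps (dcball d 0 1) (f e) v"
      using q' \<epsilon>le[OF e] unfolding Omega_eps_def by (blast intro: order_trans)
    then show "\<exists>\<sigma>>0. \<forall>s. 0 < s \<and> s < \<sigma> \<longrightarrow> d (fst e) (hdil (snd e * s) q') > snd e"
      using fH[OF e] by blast
  qed
  from bchoice[OF this] obtain g where G: "\<forall>e\<in>P. g e > 0 \<and> (\<forall>s. 0 < s \<and> s < g e \<longrightarrow> d (fst e) (hdil (snd e * s) q') > snd e)"
    by blast
  have g: "\<And>e. e \<in> P \<Longrightarrow> g e > 0" using G by blast
  have gH: "\<And>e s. e \<in> P \<Longrightarrow> 0 < s \<Longrightarrow> s < g e \<Longrightarrow> d (fst e) (hdil (snd e * s) q') > snd e"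
    using G by blast
  define r' where "r' = Min (insert 1 ((\<lambda>e. snd e * min (1/3) (g e / 2)) ` P))"
  have r'pos: "r' > 0" using fin g Pe by (auto simp: r'_def)
  have r'le1: "r' \<le> 1" using fin by (simp add: r'_def)
  have r'le: "r' \<le> snd e * min (1/3) (g e / 2)" if "e \<in> P" for e
    using fin that by (simp add: r'_def)
  define c' where "c' = hdil r' q'"
  have dc': "d 0 c' = r'"
    using dil[OF r'pos, of 0 q'] q'1 by (simp add: c'_def hdil_zero)
  have new: "(c', r') \<notin> P"
  proof
    assume "(c', r') \<in> P"
    then have "r' \<le> r' * min (1/3) (g (c', r') / 2)" using r'le[of "(c', r')"] by simp
    moreover have "r' * min (1/3) (g (c', r') / 2) \<le> r' * (1/3)"
      using r'pos by (intro mult_left_mono) auto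
    ultimately show False using r'pos by simp
  qed
  have A: "\<forall>e\<in>insert (c', r') P. 0 < snd e \<and> snd e \<le> 1 \<and> d 0 (fst e) = snd e \<and>
        (\<exists>q\<in>Omega (dcball d 0 1) v. fst e = hdil (snd e) q)"
  proof
    fix e assume "e \<in> insert (c', r') P"
    show "0 < snd e \<and> snd e \<le> 1 \<and> d 0 (fst e) = snd e \<and>
        (\<exists>q\<in>Omega (dcball d 0 1) v. fst e = hdil (snd e) q)"
    proof (cases "e = (c', r')")
      case True
      then show ?thesis using r'pos r'le1 dc' q'O by (auto simp: c'_def)
    next
      case False
      then have "e \<in> P" using \<open>e \<in> insert (c', r') P\<close> by blast
      then show ?thesis by (rule Pe)
    qed
  qed
  have B: "\<forall>x\<in>insert (c', r') P. \<forall>y\<in>insert (c', r') P. x \<noteq> y \<longrightarrow> d (fst x) (fst y) > snd x"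
  proof (intro ballI impI)
    fix x y assume x: "x \<in> insert (c', r') P" and y: "y \<in> insert (c', r') P" and xy: "x \<noteq> y"
    show "d (fst x) (fst y) > snd x"
    proof (cases "x = (c', r')")
      case True
      then have yP: "y \<in> P" using y xy by auto
      have "snd y * min (1/3) (g y / 2) \<le> snd y * (1/3)"
        using Pe[OF yP] by (intro mult_left_mono) auto
      then have "snd y \<ge> 3 * r'" using r'le[OF yP] by simp
      moreover have "d 0 (fst y) \<le> d 0 c' + d c' (fst y)" by (rule tri)
      moreover have "d 0 (fst y) = snd y" using Pe[OF yP] by blast
      ultimately show ?thesis using True dc' r'pos by simp
    next
      case False
      then have xP: "x \<in> P" using x by auto
      show ?thesis
      proof (cases "y = (c', r')")
        case False
        then have "y \<in> P" using y by auto
        then show ?thesis using Pxy xP xy by blast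
      next
        case True
        have sx: "snd x > 0" using Pe[OF xP] by blast
        define s where "s = r' / snd x"
        have "snd x * min (1/3) (g x / 2) \<le> snd x * (g x / 2)"
          using sx by (intro mult_left_mono) auto
        then have "r' \<le> snd x * (g x / 2)" using r'le[OF xP] by linarith
        then have "s \<le> g x / 2" using sx by (simp add: s_def divide_simps mult.commute)
        then have "s < g x" using g[OF xP] by simp
        moreover have "s > 0" using sx r'pos by (simp add: s_def)
        ultimately have "d (fst x) (hdil (snd x * s) q') > snd x" using gH[OF xP] by blast
        moreover have "snd x * s = r'" using sx by (simp add: s_def)
        ultimately show ?thesis using True by (simp add: c'_def)
      qed
    qed
  qed
  have "goodset d v (insert (c', r') P)" using fin A B by (simp add: goodset_def)
  moreover have "card (insert (c', r') P) = Suc n" using new fin cP by simp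
  ultimately show ?case by blast
qed


theorem theorem6p1:
  fixes d :: "hpoint \<Rightarrow> hpoint \<Rightarrow> real" and v :: hpoint and \<epsilon>0 :: real
  assumes "homogeneous_distance d"
    and "snd (snd v) = 0" and "v \<noteq> 0"
    and "\<epsilon>0 > 0"
    and "\<forall>\<epsilon>. 0 < \<epsilon> \<and> \<epsilon> \<le> \<epsilon>0 \<longrightarrow> Omega_eps (dcball d 0 1) \<epsilon> v \<noteq> {}"
  shows "\<not> BCP d"
proof
  assume "BCP d"
  then obtain N :: nat where HN: "\<forall>(A :: hpoint set) (\<B> :: (hpoint \<times> real) set).
        (\<exists>c R. \<forall>a\<in>A. d c a \<le> R) \<longrightarrow>
        (\<forall>(c, r)\<in>\<B>. r > 0) \<longrightarrow>
        (\<forall>a\<in>A. \<exists>r. (a, r) \<in> \<B>) \<longrightarrow>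
        (\<exists>\<F> \<subseteq> \<B>. (\<forall>a\<in>A. \<exists>(c, r)\<in>\<F>. a \<in> dcball d c r) \<and>
           (\<forall>x. finite {(c, r)\<in>\<F>. x \<in> dcball d c r} \<and>
                 card {(c, r)\<in>\<F>. x \<in> dcball d c r} \<le> N))"
    unfolding BCP_def by blast
  obtain P where gP: "goodset d v P" and cP: "card P = Suc N"
    using build[OF assms(1) assms(4) assms(5)] by blast
  have fin: "finite P" using gP by (simp add: goodset_def)
  have Pe: "\<And>e. e \<in> P \<Longrightarrow> 0 < snd e \<and> snd e \<le> 1 \<and> d 0 (fst e) = snd e"
    using gP by (simp add: goodset_def)
  have Pxy: "\<And>x y. x \<in> P \<Longrightarrow> y \<in> P \<Longrightarrow> x \<noteq> y \<Longrightarrow> d (fst x) (fst y) > snd x"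
    using gP by (simp add: goodset_def)
  have sym: "\<And>p q. d p q = d q p"
    using assms(1) by (auto simp: homogeneous_distance_def is_distance_def)
  have c0: "\<forall>a\<in>fst ` P. d 0 a \<le> 1"
  proof
    fix a assume "a \<in> fst ` P"
    then obtain e where "e \<in> P" "a = fst e" by blast
    then show "d 0 a \<le> 1" using Pe[of e] by simp
  qed
  then have c1: "\<exists>c R. \<forall>a\<in>fst ` P. d c a \<le> R" by blast
  have c2: "\<forall>(c, r)\<in>P. r > 0" using Pe by force
  have c3: "\<forall>a\<in>fst ` P. \<exists>r. (a, r) \<in> P" by force
  obtain F where FP: "F \<subseteq> P" and cov: "\<forall>a\<in>fst ` P. \<exists>(c, r)\<in>F. a \<in> dcball d c r"
    and mult: "\<forall>x. finite {(c, r)\<in>F. x \<in> dcball d c r} \<and>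
                 card {(c, r)\<in>F. x \<in> dcball d c r} \<le> N"
    using HN[THEN spec[of _ "fst ` P"], THEN spec[of _ P], THEN mp, OF c1, THEN mp, OF c2, THEN mp, OF c3] by blast
  have PF: "P \<subseteq> F"
  proof
    fix e assume e: "e \<in> P"
    then have "fst e \<in> fst ` P" by blast
    then obtain c r where cr: "(c, r) \<in> F" "fst e \<in> dcball d c r" using cov by blast
    have crP: "(c, r) \<in> P" using cr FP by blast
    have "(c, r) = e"
    proof (rule ccontr)
      assume "(c, r) \<noteq> e"
      then have "d c (fst e) > r" using Pxy[OF crP e] by simp
      then show False using cr(2) by (simp add: dcball_def)
    qed
    then show "e \<in> F" using cr by simp
  qed
  have "P \<subseteq> {(c, r)\<in>F. 0 \<in> dcball d c r}"
  proof
    fix e assume e: "e \<in> P"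
    obtain c r where er: "e = (c, r)" by (cases e)
    have "d c 0 = r" using Pe[OF e] sym[of c 0] er by simp
    then show "e \<in> {(c, r)\<in>F. 0 \<in> dcball d c r}" using PF e er by (auto simp: dcball_def)
  qed
  then have "card P \<le> card {(c, r)\<in>F. 0 \<in> dcball d c r}"
    using mult[THEN spec[of _ 0]] by (intro card_mono) auto
  moreover have "card {(c, r)\<in>F. 0 \<in> dcball d c r} \<le> N" using mult[THEN spec[of _ 0]] by blast
  ultimately show False using cP by simp
qed

end
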